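(* Let $n,k\in\mathbb{N}$, $\alpha\in(0,\infty)$, and let $\vec{d}=(d_1,\dots,d_n)$ be given. (i) Let $Z_{n,1},\dots,Z_{n,n}$ be IID with $P(Z_{n,j}=d)=\frac{\alpha^{\overline{d}}}{d!}\left(\frac{\alpha}{\alpha+k}\right)^{\alpha}\left(\frac{k}{\alpha+k}\right)^{d}$ for $d=0,1,2,\dots$, and $\vec{Z}_n=(Z_{n,1},\dots,Z_{n,n})$. Then $P(\vec{D}_n^{\alpha}=\vec{d})=P(\vec{Z}_n=\vec{d}\mid Z_{n,1}+\cdots+Z_{n,n}=kn)$. (ii) Let $Y_{n,1},\dots,Y_{n,n}$ be IID Poisson random variables with mean $k$ and $\vec{Y}_n=(Y_{n,1},\dots,Y_{n,n})$. Then $P(\vec{D}_n^{\infty}=\vec{d})=P(\vec{Y}_n=\vec{d}\mid Y_{n,1}+\cdots+Y_{n,n}=kn)$.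
   Context: A $k$-out map on $[n]$ is a map $M:[n]\to[n]^k$; the in-degree of vertex $j$ is the total number of coordinates, over all vertices and all $k$ labels, of the images equal to $j$. For $\alpha\in(0,\infty)$, the random $k$-out map $M_{n,k}^{\alpha}$ has law $P(M_{n,k}^{\alpha}=M)=\prod_{j=1}^n \alpha^{\overline{d_j}}/(\alpha n)^{\overline{kn}}$, where $(d_1,\dots,d_n)$ is the in-degree sequence of $M$ and $x^{\overline{y}}=x(x+1)\cdots(x+y-1)$ (it arises from a preferential attachment process where each vertex has initial weight $\alpha$ and each chosen image gains weight $1$). $M_{n,k}^{\infty}$ is the uniformly random $k$-out map on $[n]$. $\vec{D}_n^{\alpha}=(D_{n,1}^{\alpha},\dots,D_{n,n}^{\alpha})$ and $\vec{D}_n^{\infty}$ denote the in-degree sequences of $M_{n,k}^{\alpha}$ and $M_{n,k}^{\infty}$ respectively. *)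

theory Defs
  imports "HOL-Analysis.Analysis" "HOL-Library.FuncSet"
begin

text \<open>Vertices are indexed by 0..n-1, labels by 0..k-1.  A k-out map on [n] is
  a function assigning to each (vertex, label) pair an image vertex; extensional
  outside the domain so that the set of k-out maps is finite and in bijection
  with [n] -> [n]^k.\<close>

definition kout_maps :: "nat \<Rightarrow> nat \<Rightarrow> (nat \<times> nat \<Rightarrow> nat) set" where
  "kout_maps n k = ({..<n} \<times> {..<k}) \<rightarrow>\<^sub>E {..<n}"

definition indeg :: "nat \<Rightarrow> nat \<Rightarrow> (nat \<times> nat \<Rightarrow> nat) \<Rightarrow> nat \<Rightarrow> nat" where
  "indeg n k M j = card {p \<in> {..<n} \<times> {..<k}. M p = j}"

definition kout_prob :: "real \<Rightarrow> nat \<Rightarrow> nat \<Rightarrow> (nat \<times> nat \<Rightarrow> nat) \<Rightarrow> real" where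
  "kout_prob \<alpha> n k M =
     (\<Prod>j<n. pochhammer \<alpha> (indeg n k M j)) / pochhammer (\<alpha> * real n) (k * n)"

text \<open>P(D_n^alpha = d), where d is read on indices 0..n-1.\<close>
definition prob_indeg_alpha :: "real \<Rightarrow> nat \<Rightarrow> nat \<Rightarrow> (nat \<Rightarrow> nat) \<Rightarrow> real" where
  "prob_indeg_alpha \<alpha> n k d =
     (\<Sum>M \<in> {M \<in> kout_maps n k. \<forall>j<n. indeg n k M j = d j}. kout_prob \<alpha> n k M)"

definition prob_indeg_unif :: "nat \<Rightarrow> nat \<Rightarrow> (nat \<Rightarrow> nat) \<Rightarrow> real" where
  "prob_indeg_unif n k d =
     real (card {M \<in> kout_maps n k. \<forall>j<n. indeg n k M j = d j}) / real (card (kout_maps n k))"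

text \<open>The joint pmf of an IID vector is the product of the marginals; the event
  {sum = s} is the finite union over nonnegative integer vectors with sum s
  (each entry then lies in 0..s).\<close>
definition iid_cond_prob :: "(nat \<Rightarrow> real) \<Rightarrow> nat \<Rightarrow> nat \<Rightarrow> (nat \<Rightarrow> nat) \<Rightarrow> real" where
  "iid_cond_prob p n s d =
     (if (\<Sum>j<n. d j) = s then (\<Prod>j<n. p (d j)) else 0) /
     (\<Sum>e \<in> {e \<in> {..<n} \<rightarrow>\<^sub>E {..s}. (\<Sum>j<n. e j) = s}. \<Prod>j<n. p (e j))"

definition Z_pmf :: "real \<Rightarrow> nat \<Rightarrow> nat \<Rightarrow> real" where
  "Z_pmf \<alpha> k d = pochhammer \<alpha> d / fact d * (\<alpha> / (\<alpha> + real k)) powr \<alpha>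
                   * (real k / (\<alpha> + real k)) ^ d"

text \<open>Poisson law with mean k (valid also for k = 0: point mass at 0).\<close>
definition Y_pmf :: "nat \<Rightarrow> nat \<Rightarrow> real" where
  "Y_pmf k d = real k ^ d / fact d * exp (- real k)"

end

theory Submission imports Defs begin


lemma conv_sum:
  fixes g :: "real \<Rightarrow> nat \<Rightarrow> real"
  assumes conv: "\<And>b m. g (a + b) m = (\<Sum>i\<le>m. g a i * g b (m - i))"
    and g0: "\<And>m. g 0 m = (if m = 0 then 1 else 0)"
  shows "m \<le> B \<Longrightarrow> (\<Sum>e\<in>{e \<in> {..<n} \<rightarrow>\<^sub>E {..B}. (\<Sum>j<n. e j) = m}. \<Prod>j<n. g a (e j))
         = g (real n * a) m"
proof (induction n arbitrary: m)
  case 0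
  have "{e \<in> {..<0::nat} \<rightarrow>\<^sub>E {..B}. (\<Sum>j<0. e j) = m} = (if m = 0 then {\<lambda>_. undefined} else {})"
    by auto
  then show ?case using g0 by simp
next
  case (Suc n)
  define T where "T = Sigma {..m} (\<lambda>i. {e \<in> {..<n} \<rightarrow>\<^sub>E {..B}. (\<Sum>j<n. e j) = m - i})"
  have sc: "(\<Sum>j<n. (e(n := x)) j) = (\<Sum>j<n. e j)" for e :: "nat \<Rightarrow> nat" and x by (rule sum.cong) auto
  have pc: "(\<Prod>j<n. g a ((e(n := x)) j)) = (\<Prod>j<n. g a (e j))" for e :: "nat \<Rightarrow> nat" and x by (rule prod.cong) auto
  have "(\<Sum>e\<in>{e \<in> {..<Suc n} \<rightarrow>\<^sub>E {..B}. (\<Sum>j<Suc n. e j) = m}. \<Prod>j<Suc n. g a (e j))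
      = (\<Sum>(x,e)\<in>T. (\<Prod>j<n. g a (e j)) * g a x)"
    apply (rule sum.reindex_bij_witness[where j = "\<lambda>e. (e n, e(n:=undefined))" and i = "\<lambda>(x,e). e(n:=x)"])
    using Suc.prems
    by (auto simp: T_def PiE_def Pi_def extensional_def sc pc less_Suc_eq)
  also have "\<dots> = (\<Sum>x\<le>m. \<Sum>e\<in>{e \<in> {..<n} \<rightarrow>\<^sub>E {..B}. (\<Sum>j<n. e j) = m - x}. (\<Prod>j<n. g a (e j)) * g a x)"
    unfolding T_def by (rule sum.Sigma[symmetric]) (auto intro: finite_subset[OF _ finite_PiE[of "{..<n}" "\<lambda>_. {..B}"]])
  also have "\<dots> = (\<Sum>x\<le>m. g (real n * a) (m - x) * g a x)"
    by (rule sum.cong[OF refl]) (use Suc in \<open>simp add: sum_distrib_right[symmetric]\<close>)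
  also have "\<dots> = g (a + real n * a) m"
    by (simp add: conv mult.commute)
  finally show ?case by (simp add: algebra_simps)
qed


lemma count_maps:
  fixes A :: "'a set" and n :: nat and d :: "nat \<Rightarrow> nat"
  shows "finite A \<Longrightarrow> (\<Sum>j<n. d j) = card A \<Longrightarrow>
   real (card {M \<in> A \<rightarrow>\<^sub>E {..<n}. \<forall>j<n. card {p\<in>A. M p = j} = d j})
     = fact (card A) / (\<Prod>j<n. fact (d j))"
proof (induction n arbitrary: A)
  case 0
  then have "A = {}" by simp
  then show ?case by simp
next
  case (Suc n)
  define F where "F = (\<lambda>(A'::'a set) n. {M \<in> A' \<rightarrow>\<^sub>E {..<n}. \<forall>j<n. card {p\<in>A'. M p = j} = (d j::nat)})"
  define SS where "SS = {S. S \<subseteq> A \<and> card S = d n}"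
  define \<phi> where "\<phi> = (\<lambda>M::'a \<Rightarrow> nat. ({p\<in>A. M p = n}, restrict M (A - {p\<in>A. M p = n})))"
  define \<psi> where "\<psi> = (\<lambda>(S, M'::'a \<Rightarrow> nat) p. if p \<in> S then n else M' p)"
  have bij: "bij_betw \<phi> (F A (Suc n)) (Sigma SS (\<lambda>S. F (A - S) n))"
  proof (rule bij_betw_byWitness[where f' = \<psi>])
    show "\<forall>M\<in>F A (Suc n). \<psi> (\<phi> M) = M"
      by (auto simp: F_def \<phi>_def \<psi>_def PiE_def extensional_def fun_eq_iff)
    show "\<forall>b\<in>Sigma SS (\<lambda>S. F (A - S) n). \<phi> (\<psi> b) = b"
    proof
      fix b assume b: "b \<in> Sigma SS (\<lambda>S. F (A - S) n)"
      then obtain S M' where bb: "b = (S, M')" and S: "S \<subseteq> A" and M': "M' \<in> (A - S) \<rightarrow>\<^sub>E {..<n}"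
        by (auto simp: SS_def F_def)
      have 1: "{p\<in>A. \<psi> b p = n} = S" using S M' by (auto simp: bb \<psi>_def PiE_def Pi_def)
      show "\<phi> (\<psi> b) = b" unfolding \<phi>_def 1 using S M'
        by (auto simp: bb \<psi>_def PiE_def extensional_def fun_eq_iff)
    qed
    show "\<phi> ` F A (Suc n) \<subseteq> Sigma SS (\<lambda>S. F (A - S) n)"
    proof
      fix b assume "b \<in> \<phi> ` F A (Suc n)"
      then obtain M where bb: "b = \<phi> M" and M: "M \<in> F A (Suc n)" by auto
      define S where "S = {p\<in>A. M p = n}"
      have "card S = d n" using M by (auto simp: F_def S_def)
      hence "S \<in> SS" by (auto simp: SS_def S_def)
      moreover have "restrict M (A - S) \<in> F (A - S) n"
      proof -
        have "restrict M (A - S) \<in> (A - S) \<rightarrow>\<^sub>E {..<n}"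
          using M by (auto simp: F_def S_def PiE_def Pi_def less_Suc_eq)
        moreover have "card {p\<in>A - S. restrict M (A - S) p = j} = d j" if "j < n" for j
        proof -
          have "{p\<in>A - S. restrict M (A - S) p = j} = {p\<in>A. M p = j}" using that by (auto simp: S_def)
          thus ?thesis using M that by (auto simp: F_def)
        qed
        ultimately show ?thesis by (auto simp: F_def)
      qed
      ultimately show "b \<in> Sigma SS (\<lambda>S. F (A - S) n)" by (simp add: bb \<phi>_def S_def)
    qed
    show "\<psi> ` Sigma SS (\<lambda>S. F (A - S) n) \<subseteq> F A (Suc n)"
    proof
      fix M assume "M \<in> \<psi> ` Sigma SS (\<lambda>S. F (A - S) n)"
      then obtain S M' where MM: "M = \<psi> (S, M')" and S: "S \<subseteq> A" "card S = d n" and M': "M' \<in> F (A - S) n"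
        by (auto simp: SS_def)
      have M'': "M' \<in> (A - S) \<rightarrow>\<^sub>E {..<n}" using M' by (simp add: F_def)
      have "M \<in> A \<rightarrow>\<^sub>E {..<Suc n}" using S M'' by (auto simp: MM \<psi>_def PiE_def Pi_def extensional_def)
      moreover have "card {p\<in>A. M p = j} = d j" if "j < Suc n" for j
      proof (cases "j = n")
        case True
        have "{p\<in>A. M p = j} = S" using S M'' True by (auto simp: MM \<psi>_def PiE_def Pi_def)
        thus ?thesis using S True by simp
      next
        case False
        hence "{p\<in>A. M p = j} = {p\<in>A - S. M' p = j}" using that by (auto simp: MM \<psi>_def)
        thus ?thesis using M' False that by (auto simp: F_def)
      qed
      ultimately show "M \<in> F A (Suc n)" by (simp add: F_def)
    qed
  qed
  have dn: "d n \<le> card A" using Suc.prems by simp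
  have fin: "finite (F A' m)" if "finite A'" for A' m
    unfolding F_def by (rule finite_subset[OF _ finite_PiE[of A' "\<lambda>_. {..<m}"]]) (use that in auto)
  have "card (F A (Suc n)) = card (Sigma SS (\<lambda>S. F (A - S) n))" using bij_betw_same_card[OF bij] .
  also have "\<dots> = (\<Sum>S\<in>SS. card (F (A - S) n))"
    by (rule card_SigmaI) (auto simp: SS_def Suc.prems fin intro: finite_subset[OF _ Suc.prems(1)])
  finally have "real (card (F A (Suc n))) = (\<Sum>S\<in>SS. real (card (F (A - S) n)))" by simp
  also have "\<dots> = (\<Sum>S\<in>SS. fact (card A - d n) / (\<Prod>j<n. fact (d j)))"
  proof (rule sum.cong[OF refl])
    fix S assume "S \<in> SS"
    hence S: "S \<subseteq> A" "card S = d n" by (auto simp: SS_def)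
    have c: "card (A - S) = card A - d n" using S Suc.prems(1) by (simp add: card_Diff_subset finite_subset)
    show "real (card (F (A - S) n)) = fact (card A - d n) / (\<Prod>j<n. fact (d j))"
      unfolding F_def using Suc.IH[of "A - S"] Suc.prems c by simp
  qed
  also have "\<dots> = real (card A choose d n) * fact (card A - d n) / (\<Prod>j<n. fact (d j))"
    by (simp add: SS_def n_subsets Suc.prems)
  also have "\<dots> = fact (card A) / (\<Prod>j<Suc n. fact (d j))"
    by (simp add: binomial_fact[OF dn] field_simps)
  finally show ?case by (simp add: F_def)
qed

lemma indeg_sum:
  fixes n :: nat
  assumes "finite A" "M \<in> A \<rightarrow>\<^sub>E {..<n}"
  shows "(\<Sum>j<n. card {p\<in>A. M p = j}) = card A"
proof -
  have "(\<Sum>j<n. sum (\<lambda>_. 1::nat) {p. p \<in> A \<and> M p = j}) = sum (\<lambda>_. 1) A"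
    by (rule sum.group) (use assms in auto)
  thus ?thesis by simp
qed

lemma conv_poch: "pochhammer (a + b) m / fact m
   = (\<Sum>i\<le>m. pochhammer a i / fact i * (pochhammer b (m - i) / fact (m - i)))" for a b :: real
proof -
  have "pochhammer (a + b) m / fact m = (\<Sum>i\<le>m. of_nat (m choose i) * pochhammer a i * pochhammer b (m - i) / fact m)"
    by (simp add: pochhammer_binomial_sum sum_divide_distrib)
  also have "\<dots> = (\<Sum>i\<le>m. pochhammer a i / fact i * (pochhammer b (m - i) / fact (m - i)))"
    by (rule sum.cong[OF refl]) (simp add: binomial_fact field_simps)
  finally show ?thesis .
qed

lemma conv_pow: "(a + b) ^ m / fact m
   = (\<Sum>i\<le>m. a ^ i / fact i * (b ^ (m - i) / fact (m - i)))" for a b :: real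
proof -
  have "(a + b) ^ m / fact m = (\<Sum>i\<le>m. of_nat (m choose i) * a ^ i * b ^ (m - i) / fact m)"
    by (simp add: binomial_ring sum_divide_distrib)
  also have "\<dots> = (\<Sum>i\<le>m. a ^ i / fact i * (b ^ (m - i) / fact (m - i)))"
    by (rule sum.cong[OF refl]) (simp add: binomial_fact field_simps)
  finally show ?thesis .
qed

theorem lemma1:
  fixes n k :: nat and \<alpha> :: real and d :: "nat \<Rightarrow> nat"
  assumes "\<alpha> > 0"
  shows "prob_indeg_alpha \<alpha> n k d = iid_cond_prob (Z_pmf \<alpha> k) n (k * n) d
         \<and> prob_indeg_unif n k d = iid_cond_prob (Y_pmf k) n (k * n) d"
proof -
  define A where "A = {..<n} \<times> {..<k}"
  have finA: "finite A" and cA: "card A = k * n" by (auto simp: A_def)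
  define D where "D = {M \<in> kout_maps n k. \<forall>j<n. indeg n k M j = d j}"
  have D: "D = {M \<in> A \<rightarrow>\<^sub>E {..<n}. \<forall>j<n. card {p\<in>A. M p = j} = d j}"
    by (simp add: D_def A_def kout_maps_def indeg_def)
  define E where "E = {e \<in> {..<n} \<rightarrow>\<^sub>E {..k * n}. (\<Sum>j<n. e j) = k * n}"
  have pa: "prob_indeg_alpha \<alpha> n k d = (\<Sum>M\<in>D. kout_prob \<alpha> n k M)"
    by (simp add: prob_indeg_alpha_def D_def)
  have pu: "prob_indeg_unif n k d = real (card D) / real (card (kout_maps n k))"
    by (simp add: prob_indeg_unif_def D_def)
  have ckm: "card (kout_maps n k) = n ^ (k * n)"
    by (simp add: kout_maps_def card_PiE mult.commute)
  show ?thesis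
  proof (cases "(\<Sum>j<n. d j) = k * n")
    case False
    have "D = {}"
    proof (rule ccontr)
      assume "D \<noteq> {}"
      then obtain M where M: "M \<in> D" by auto
      hence "(\<Sum>j<n. card {p\<in>A. M p = j}) = card A" using finA by (intro indeg_sum) (auto simp: D)
      moreover have "(\<Sum>j<n. card {p\<in>A. M p = j}) = (\<Sum>j<n. d j)" using M by (auto simp: D)
      ultimately show False using False cA by simp
    qed
    then show ?thesis using False by (simp add: pa pu iid_cond_prob_def)
  next
    case True
    have cD: "real (card D) = fact (k * n) / (\<Prod>j<n. fact (d j))"
      unfolding D using count_maps[OF finA, where n=n and d=d] True cA by simp
    define gP where "gP = (\<lambda>(a::real) m. pochhammer a m / fact m)"
    have convP: "gP (a + b) m = (\<Sum>i\<le>m. gP a i * gP b (m - i))" for a b m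
      unfolding gP_def by (rule conv_poch)
    have g0P: "gP 0 m = (if m = 0 then 1 else 0)" for m
      by (simp add: gP_def pochhammer_0_left)
    define c where "c = (\<alpha> / (\<alpha> + real k)) powr \<alpha>"
    define q where "q = real k / (\<alpha> + real k)"
    have Zp: "(\<Prod>j<n. Z_pmf \<alpha> k (e j)) = (\<Prod>j<n. gP \<alpha> (e j)) * (c ^ n * q ^ (\<Sum>j<n. e j))" for e
    proof -
      have "Z_pmf \<alpha> k m = gP \<alpha> m * c * q ^ m" for m
        by (simp add: Z_pmf_def gP_def c_def q_def)
      hence "(\<Prod>j<n. Z_pmf \<alpha> k (e j)) = (\<Prod>j<n. gP \<alpha> (e j) * c * q ^ e j)" by simp
      also have "\<dots> = (\<Prod>j<n. gP \<alpha> (e j)) * (c ^ n * q ^ (\<Sum>j<n. e j))"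
        by (simp add: prod.distrib power_sum mult.assoc)
      finally show ?thesis .
    qed
    have C0: "c ^ n * q ^ (k * n) \<noteq> 0"
    proof -
      have "c > 0" using assms by (simp add: c_def)
      moreover have "q ^ (k * n) \<noteq> 0" using assms by (cases "k = 0") (auto simp: q_def)
      ultimately show ?thesis by simp
    qed
    have den: "(\<Sum>e\<in>E. \<Prod>j<n. Z_pmf \<alpha> k (e j)) = c ^ n * q ^ (k * n) * gP (real n * \<alpha>) (k * n)"
    proof -
      have "(\<Sum>e\<in>E. \<Prod>j<n. Z_pmf \<alpha> k (e j)) = (\<Sum>e\<in>E. (\<Prod>j<n. gP \<alpha> (e j)) * (c ^ n * q ^ (k * n)))"
        by (rule sum.cong[OF refl]) (auto simp: Zp E_def)
      also have "\<dots> = c ^ n * q ^ (k * n) * (\<Sum>e\<in>E. \<Prod>j<n. gP \<alpha> (e j))"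
        by (simp add: sum_distrib_left mult.commute)
      also have "(\<Sum>e\<in>E. \<Prod>j<n. gP \<alpha> (e j)) = gP (real n * \<alpha>) (k * n)"
        unfolding E_def by (rule conv_sum[OF convP g0P]) simp
      finally show ?thesis .
    qed
    have P0: "pochhammer (\<alpha> * real n) (k * n) \<noteq> 0"
      using assms by (cases "n = 0") (auto intro!: pochhammer_pos[THEN less_imp_neq, symmetric])
    have kp: "kout_prob \<alpha> n k M = (\<Prod>j<n. pochhammer \<alpha> (d j)) / pochhammer (\<alpha> * real n) (k * n)"
      if "M \<in> D" for M using that by (simp add: kout_prob_def D_def)
    have part1: "prob_indeg_alpha \<alpha> n k d = iid_cond_prob (Z_pmf \<alpha> k) n (k * n) d"
    proof -
      have "prob_indeg_alpha \<alpha> n k d = real (card D) * ((\<Prod>j<n. pochhammer \<alpha> (d j)) / pochhammer (\<alpha> * real n) (k * n))"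
        by (simp add: pa kp)
      moreover have "iid_cond_prob (Z_pmf \<alpha> k) n (k * n) d =
          ((\<Prod>j<n. gP \<alpha> (d j)) * (c ^ n * q ^ (k * n))) / (c ^ n * q ^ (k * n) * gP (real n * \<alpha>) (k * n))"
      proof -
        have "iid_cond_prob (Z_pmf \<alpha> k) n (k * n) d = (\<Prod>j<n. Z_pmf \<alpha> k (d j)) / (\<Sum>e\<in>E. \<Prod>j<n. Z_pmf \<alpha> k (e j))"
          using True by (simp add: iid_cond_prob_def E_def)
        also have "\<dots> = ((\<Prod>j<n. gP \<alpha> (d j)) * (c ^ n * q ^ (k * n))) / (c ^ n * q ^ (k * n) * gP (real n * \<alpha>) (k * n))"
          unfolding den Zp[of d] True ..
        finally show ?thesis .
      qed
      moreover have "((\<Prod>j<n. gP \<alpha> (d j)) * (c ^ n * q ^ (k * n))) / (c ^ n * q ^ (k * n) * gP (real n * \<alpha>) (k * n))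
          = (\<Prod>j<n. gP \<alpha> (d j)) / gP (real n * \<alpha>) (k * n)"
        using C0 by (simp add: mult.commute)
      moreover have "(\<Prod>j<n. gP \<alpha> (d j)) = (\<Prod>j<n. pochhammer \<alpha> (d j)) / (\<Prod>j<n. fact (d j))"
        by (simp add: gP_def prod_dividef)
      moreover have "real n * \<alpha> = \<alpha> * real n" by simp
      ultimately show ?thesis using P0
        by (simp add: cD gP_def)
    qed
    define gE where "gE = (\<lambda>(a::real) m. a ^ m / fact m)"
    have convE: "gE (a + b) m = (\<Sum>i\<le>m. gE a i * gE b (m - i))" for a b m
      unfolding gE_def by (rule conv_pow)
    have g0E: "gE 0 m = (if m = 0 then 1 else 0)" for m
      by (simp add: gE_def)
    have Yp: "(\<Prod>j<n. Y_pmf k (e j)) = (\<Prod>j<n. gE (real k) (e j)) * exp (- real k) ^ n" for e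
    proof -
      have "Y_pmf k m = gE (real k) m * exp (- real k)" for m
        by (simp add: Y_pmf_def gE_def)
      thus ?thesis by (simp add: prod.distrib)
    qed
    have denE: "(\<Sum>e\<in>E. \<Prod>j<n. Y_pmf k (e j)) = exp (- real k) ^ n * gE (real n * real k) (k * n)"
    proof -
      have "(\<Sum>e\<in>E. \<Prod>j<n. Y_pmf k (e j)) = exp (- real k) ^ n * (\<Sum>e\<in>E. \<Prod>j<n. gE (real k) (e j))"
        by (simp add: Yp sum_distrib_left mult.commute)
      also have "(\<Sum>e\<in>E. \<Prod>j<n. gE (real k) (e j)) = gE (real n * real k) (k * n)"
        unfolding E_def by (rule conv_sum[OF convE g0E]) simp
      finally show ?thesis .
    qed
    have pk: "(\<Prod>j<n. gE (real k) (d j)) = real k ^ (k * n) / (\<Prod>j<n. fact (d j))"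
      using True by (simp add: gE_def prod_dividef power_sum[symmetric])
    have nz: "real n ^ (k * n) \<noteq> 0" "real k ^ (k * n) \<noteq> 0"
      by (cases "n = 0"; cases "k = 0"; simp)+
    have part2: "prob_indeg_unif n k d = iid_cond_prob (Y_pmf k) n (k * n) d"
    proof -
      have "iid_cond_prob (Y_pmf k) n (k * n) d =
          ((\<Prod>j<n. gE (real k) (d j)) * exp (- real k) ^ n) / (exp (- real k) ^ n * gE (real n * real k) (k * n))"
      proof -
        have "iid_cond_prob (Y_pmf k) n (k * n) d = (\<Prod>j<n. Y_pmf k (d j)) / (\<Sum>e\<in>E. \<Prod>j<n. Y_pmf k (e j))"
          using True by (simp add: iid_cond_prob_def E_def)
        also have "\<dots> = ((\<Prod>j<n. gE (real k) (d j)) * exp (- real k) ^ n) / (exp (- real k) ^ n * gE (real n * real k) (k * n))"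
          unfolding denE Yp[of d] ..
        finally show ?thesis .
      qed
      also have "\<dots> = (\<Prod>j<n. gE (real k) (d j)) / gE (real n * real k) (k * n)"
        by (simp add: mult.commute)
      also have "\<dots> = (real k ^ (k * n) / (\<Prod>j<n. fact (d j))) / (real n ^ (k * n) * real k ^ (k * n) / fact (k * n))"
        unfolding pk by (simp add: gE_def power_mult_distrib)
      also have "\<dots> = (fact (k * n) / (\<Prod>j<n. fact (d j))) / real n ^ (k * n)"
        using nz by (simp add: field_simps)
      finally show ?thesis by (simp add: pu ckm cD)
    qed
    show ?thesis using part1 part2 by simp
  qed
qed
end
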